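(* Let $s$ be a positive integer, let $\lambda_0 \geq 0 > \lambda_1$ be real numbers and let $z_1, \ldots, z_{2s}$ be complex numbers with $z_j = a_j + b_j i$, $a_j \in \mathbb{R}$, $b_j > 0$ for $j = 1, \ldots, 2s$. If $\lambda_0 + \lambda_1 - 2\sum_{j=1}^{2s} |z_j| \geq 0$, then there is a $(4s+2) \times (4s+2)$ normal centrosymmetric nonnegative matrix with eigenvalues $\lambda_0, \lambda_1, z_1, \ldots, z_{2s}, \overline{z}_1, \ldots, \overline{z}_{2s}$.
   Context: $J$ denotes the reverse identity matrix of the appropriate size (ones on the anti-diagonal, zeros elsewhere). A square matrix $Q$ is centrosymmetric if $JQJ = Q$, nonnegative if all entries are nonnegative, and normal if $QQ^* = Q^*Q$. *)

theory Defs
  imports "Jordan_Normal_Form.Char_Poly" "Jordan_Normal_Form.Schur_Decomposition"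
begin

definition exchange_mat :: "nat \<Rightarrow> 'a :: {zero,one} mat" where
  "exchange_mat n = mat n n (\<lambda>(i,j). if i + j = n - 1 then 1 else 0)"

definition centrosymmetric :: "'a :: semiring_1 mat \<Rightarrow> bool" where
  "centrosymmetric Q \<longleftrightarrow> square_mat Q \<and>
     exchange_mat (dim_row Q) * Q * exchange_mat (dim_row Q) = Q"

definition nonneg_mat :: "real mat \<Rightarrow> bool" where
  "nonneg_mat Q \<longleftrightarrow> (\<forall>i < dim_row Q. \<forall>j < dim_col Q. Q $$ (i,j) \<ge> 0)"

definition normal_mat :: "complex mat \<Rightarrow> bool" where
  "normal_mat Q \<longleftrightarrow> square_mat Q \<and> Q * mat_adjoint Q = mat_adjoint Q * Q"

definition has_eigenvalues :: "complex mat \<Rightarrow> complex list \<Rightarrow> bool" where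
  "has_eigenvalues Q xs \<longleftrightarrow> square_mat Q \<and>
     char_poly Q = (\<Prod>x\<leftarrow>xs. [:- x, 1:])"

end

theory Submission
  imports Defs
begin


lemma sum_split4:
  fixes F :: "nat \<Rightarrow> 'a::comm_monoid_add"
  shows "(\<Sum>k\<in>{0..<4*s+2}. F k) = F 0 + F 1 + (\<Sum>j=1..2*s. F (j+1)) + (\<Sum>j=1..2*s. F (j+1+2*s))"
proof -
  have a: "{0..<4*s+2} = {0..<2*s+2} \<union> {2*s+2..<4*s+2}" by auto
  have b: "(\<Sum>k\<in>{0..<4*s+2}. F k) = (\<Sum>k\<in>{0..<2*s+2}. F k) + (\<Sum>k\<in>{2*s+2..<4*s+2}. F k)"
    unfolding a by (rule sum.union_disjoint) auto
  have c: "(\<Sum>k\<in>{0..<2*s+2}. F k) = F 0 + F 1 + (\<Sum>j=1..2*s. F (j+1))"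
  proof -
    have e: "(\<Sum>j=1..2*s. F (j+1)) = (\<Sum>k\<in>{2..2*s+1}. F k)"
      using sum.shift_bounds_cl_Suc_ivl[of F 1 "2*s"] by (simp add: numeral_2_eq_2)
    have "{0..<2*s+2} = {0,1} \<union> {2..2*s+1}" by auto
    then have "(\<Sum>k\<in>{0..<2*s+2}. F k) = (\<Sum>k\<in>{0,1}. F k) + (\<Sum>k\<in>{2..2*s+1}. F k)"
      by (simp add: sum.union_disjoint add.assoc)
    then show ?thesis using e by simp
  qed
  have d: "(\<Sum>k\<in>{2*s+2..<4*s+2}. F k) = (\<Sum>j=1..2*s. F (j+1+2*s))"
  proof -
    have d1: "(\<Sum>j=1..2*s. F (j+1+2*s)) = (\<Sum>j=1..2*s. F (j+(2*s+1)))" by (simp add: ac_simps)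
    have d2: "\<dots> = (\<Sum>k\<in>{1+(2*s+1)..2*s+(2*s+1)}. F k)" by (rule sum.shift_bounds_cl_nat_ivl[symmetric])
    have d3: "{1+(2*s+1)..2*s+(2*s+1)} = {2*s+2..<4*s+2}" by auto
    show ?thesis by (simp only: d1 d2 d3)
  qed
  show ?thesis by (simp only: b c d)
qed

definition sg :: "nat \<Rightarrow> nat \<Rightarrow> real" where
  "sg s a = (if a < 2*s+1 then 1 else -1)"
definition sig :: "nat \<Rightarrow> nat \<Rightarrow> nat" where
  "sig s a = (if a < 2*s+1 then a else 4*s+1-a)"
definition gg :: "nat \<Rightarrow> nat \<Rightarrow> nat" where
  "gg s j = (if j \<le> s then j else j - s)"
definition phi :: "nat \<Rightarrow> nat \<Rightarrow> nat \<Rightarrow> complex" where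
  "phi s j a = (if j \<le> s then 1 else complex_of_real (sg s a)) *
     cis (2*pi*real (gg s j)*real (sig s a)/real (2*s+1))"
definition Qm :: "nat \<Rightarrow> real \<Rightarrow> real \<Rightarrow> (nat \<Rightarrow> complex) \<Rightarrow> real mat" where
  "Qm s l0 l1 z = mat (4*s+2) (4*s+2) (\<lambda>(a,b). (l0 + sg s a * sg s b * l1 +
     (\<Sum>j=1..2*s. 2 * Re (z j * phi s j a * cnj (phi s j b)))) / real (4*s+2))"
definition u0 :: "nat \<Rightarrow> nat \<Rightarrow> nat \<Rightarrow> complex" where
  "u0 s a k = (if k = 0 then 1 else if k = 1 then complex_of_real (sg s a)
     else if k \<le> 2*s+1 then phi s (k-1) a else cnj (phi s (k-1-2*s) a))"
definition Um :: "nat \<Rightarrow> complex mat" where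
  "Um s = mat (4*s+2) (4*s+2) (\<lambda>(a,k). u0 s a k / complex_of_real (sqrt (real (4*s+2))))"
definition Am :: "nat \<Rightarrow> complex mat" where
  "Am s = mat (4*s+2) (4*s+2) (\<lambda>(k,b). cnj (u0 s b k) / complex_of_real (sqrt (real (4*s+2))))"
definition dfun :: "nat \<Rightarrow> real \<Rightarrow> real \<Rightarrow> (nat \<Rightarrow> complex) \<Rightarrow> nat \<Rightarrow> complex" where
  "dfun s l0 l1 z k = (if k = 0 then complex_of_real l0 else if k = 1 then complex_of_real l1
     else if k \<le> 2*s+1 then z (k-1) else cnj (z (k-1-2*s)))"

lemma Um_carrier[simp]: "Um s \<in> carrier_mat (4*s+2) (4*s+2)" by (simp add: Um_def)
lemma Am_carrier[simp]: "Am s \<in> carrier_mat (4*s+2) (4*s+2)" by (simp add: Am_def)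
lemma Qm_carrier[simp]: "Qm s l0 l1 z \<in> carrier_mat (4*s+2) (4*s+2)" by (simp add: Qm_def)
lemma Um_carrier'[simp]: "Um s \<in> carrier_mat (Suc (Suc (4*s))) (Suc (Suc (4*s)))" by (simp add: Um_def)
lemma Am_carrier'[simp]: "Am s \<in> carrier_mat (Suc (Suc (4*s))) (Suc (Suc (4*s)))" by (simp add: Am_def)
lemma Qm_carrier'[simp]: "Qm s l0 l1 z \<in> carrier_mat (Suc (Suc (4*s))) (Suc (Suc (4*s)))" by (simp add: Qm_def)

lemma decomp:
  "Um s * mat_diag (4*s+2) (dfun s l0 l1 z) * Am s = map_mat complex_of_real (Qm s l0 l1 z)"
proof (rule eq_matI)
  let ?n = "4*s+2"
  let ?c = "complex_of_real (sqrt (real ?n))"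
  let ?d = "dfun s l0 l1 z"
  have UD: "Um s * mat_diag ?n ?d = mat ?n ?n (\<lambda>(i,k). Um s $$ (i,k) * ?d k)"
    by (rule mat_diag_mult_right[OF Um_carrier])
  fix a b assume "a < dim_row (map_mat complex_of_real (Qm s l0 l1 z))"
    "b < dim_col (map_mat complex_of_real (Qm s l0 l1 z))"
  then have a: "a < ?n" and b: "b < ?n" by (auto simp: Qm_def)
  have cc: "?c * ?c = complex_of_real (real ?n)"
  proof -
    have "sqrt (real ?n) * sqrt (real ?n) = real ?n" by simp
    then show ?thesis by (metis of_real_mult)
  qed
  have cnz: "?c \<noteq> 0" by simp
  define G where "G k = u0 s a k * ?d k * cnj (u0 s b k)" for k
  have "(Um s * mat_diag ?n ?d * Am s) $$ (a,b) = (\<Sum>k\<in>{0..<?n}. (u0 s a k / ?c) * ?d k * (cnj (u0 s b k) / ?c))"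
    unfolding UD using a b by (simp add: Am_def Um_def scalar_prod_def)
  also have "\<dots> = (\<Sum>k\<in>{0..<?n}. G k) / (?c * ?c)"
    unfolding G_def sum_divide_distrib by (intro sum.cong refl) (simp add: divide_divide_eq_left)
  also have "(\<Sum>k\<in>{0..<?n}. G k) = G 0 + G 1 + ((\<Sum>j=1..2*s. G (j+1)) + (\<Sum>j=1..2*s. G (j+1+2*s)))"
    by (simp only: sum_split4 add.assoc)
  also have "(\<Sum>j=1..2*s. G (j+1)) + (\<Sum>j=1..2*s. G (j+1+2*s)) =
     (\<Sum>j=1..2*s. complex_of_real (2 * Re (z j * phi s j a * cnj (phi s j b))))"
  proof -
    have "(\<Sum>j=1..2*s. G (j+1)) + (\<Sum>j=1..2*s. G (j+1+2*s)) = (\<Sum>j=1..2*s. G (j+1) + G (j+1+2*s))"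
      by (simp add: sum.distrib)
    also have "\<dots> = (\<Sum>j=1..2*s. complex_of_real (2 * Re (z j * phi s j a * cnj (phi s j b))))"
    proof (rule sum.cong)
      fix j assume j: "j \<in> {1..2*s}"
      have "G (j+1) + G (j+1+2*s) = z j * phi s j a * cnj (phi s j b) + cnj (z j * phi s j a * cnj (phi s j b))"
        using j by (simp add: G_def u0_def dfun_def)
      then show "G (j+1) + G (j+1+2*s) = complex_of_real (2 * Re (z j * phi s j a * cnj (phi s j b)))"
        by (simp only: complex_add_cnj)
    qed simp
    finally show ?thesis .
  qed
  finally have "(Um s * mat_diag ?n ?d * Am s) $$ (a,b) =
     (G 0 + G 1 + (\<Sum>j=1..2*s. complex_of_real (2 * Re (z j * phi s j a * cnj (phi s j b))))) / (?c * ?c)" .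
  also have "\<dots> = (G 0 + G 1 + (\<Sum>j=1..2*s. complex_of_real (2 * Re (z j * phi s j a * cnj (phi s j b))))) / complex_of_real (real ?n)"
    unfolding cc ..
  also have "\<dots> = complex_of_real ((l0 + sg s a * sg s b * l1 +
     (\<Sum>j=1..2*s. 2 * Re (z j * phi s j a * cnj (phi s j b)))) / real ?n)"
    by (simp add: G_def u0_def dfun_def)
  also have "\<dots> = map_mat complex_of_real (Qm s l0 l1 z) $$ (a,b)"
    using a b by (simp add: Qm_def)
  finally show "(Um s * mat_diag ?n ?d * Am s) $$ (a,b) = map_mat complex_of_real (Qm s l0 l1 z) $$ (a,b)" .
qed (auto simp: Qm_def Um_def Am_def)


lemma two_sin_cos: "2 * sin A * cos B = sin (B + A) - sin (B - (A::real))"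
  by (simp add: sin_add sin_diff)

lemma dirichlet:
  fixes x :: real
  shows "sin (x/2) * (1 + (\<Sum>i=1..s. 2 * cos (real i * x))) = sin ((real s + 1/2) * x)"
proof (induction s)
  case 0
  then show ?case by (simp add: mult.commute)
next
  case (Suc s)
  have "sin (x/2) * (1 + (\<Sum>i=1..Suc s. 2 * cos (real i * x))) =
        sin (x/2) * (1 + (\<Sum>i=1..s. 2 * cos (real i * x))) + 2 * sin (x/2) * cos (real (Suc s) * x)"
    by (simp add: algebra_simps)
  also have "\<dots> = sin ((real s + 1/2) * x) + (sin (real (Suc s) * x + x/2) - sin (real (Suc s) * x - x/2))"
    using Suc by (simp only: two_sin_cos)
  also have "real (Suc s) * x - x/2 = (real s + 1/2) * x" by (simp add: algebra_simps)
  also have "real (Suc s) * x + x/2 = (real (Suc s) + 1/2) * x" by (simp add: algebra_simps)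
  finally show ?case by simp
qed

lemma phi_prod:
  "phi s j a * cnj (phi s j b) = (if j \<le> s then 1 else complex_of_real (sg s a * sg s b)) *
     cis (real (gg s j) * (2*pi*(real (sig s a) - real (sig s b))/real (2*s+1)))"
proof -
  have "cis (2*pi*real (gg s j)*real (sig s a)/real (2*s+1)) * cnj (cis (2*pi*real (gg s j)*real (sig s b)/real (2*s+1)))
     = cis (real (gg s j) * (2*pi*(real (sig s a) - real (sig s b))/real (2*s+1)))"
    unfolding cis_cnj cis_mult by (simp add: algebra_simps diff_divide_distrib)
  then show ?thesis by (auto simp: phi_def)
qed

lemma Re_phi_prod:
  "Re (phi s j a * cnj (phi s j b)) = (if j \<le> s then 1 else sg s a * sg s b) *
     cos (real (gg s j) * (2*pi*(real (sig s a) - real (sig s b))/real (2*s+1)))"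
  unfolding phi_prod by (simp add: Re_complex_of_real)

lemma sum_Re_phi:
  fixes s a b :: nat
  defines "x \<equiv> 2*pi*(real (sig s a) - real (sig s b))/real (2*s+1)"
  shows "(\<Sum>j=1..2*s. 2 * Re (phi s j a * cnj (phi s j b))) =
     (1 + sg s a * sg s b) * (\<Sum>i=1..s. 2 * cos (real i * x))"
proof -
  let ?f = "\<lambda>j. 2 * Re (phi s j a * cnj (phi s j b))"
  have split: "{1..2*s} = {1..s} \<union> {s+1..2*s}" by auto
  have "(\<Sum>j=1..2*s. ?f j) = (\<Sum>j=1..s. ?f j) + (\<Sum>j\<in>{s+1..2*s}. ?f j)"
    unfolding split by (rule sum.union_disjoint) auto
  also have "(\<Sum>j=1..s. ?f j) = (\<Sum>i=1..s. 2 * cos (real i * x))"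
    by (rule sum.cong[OF refl], subst Re_phi_prod) (simp add: gg_def x_def)
  also have "(\<Sum>j\<in>{s+1..2*s}. ?f j) = (\<Sum>i=1..s. ?f (i+s))"
  proof -
    have "(\<Sum>i=1..s. ?f (i+s)) = (\<Sum>j\<in>{1+s..s+s}. ?f j)" by (rule sum.shift_bounds_cl_nat_ivl[symmetric])
    moreover have "{1+s..s+s} = {s+1..2*s}" by auto
    ultimately show ?thesis by metis
  qed
  also have "\<dots> = (\<Sum>i=1..s. sg s a * sg s b * (2 * cos (real i * x)))"
    by (rule sum.cong[OF refl], subst Re_phi_prod) (simp add: gg_def x_def)
  finally show ?thesis by (simp add: sum_distrib_left algebra_simps)
qed


lemma sig_lt: "a < 4*s+2 \<Longrightarrow> sig s a < 2*s+1" unfolding sig_def by (cases "a < 2*s+1") auto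
lemma sg_sq: "sg s a * sg s a = 1" by (simp add: sg_def)
lemma sig_eq_sg: "a < 4*s+2 \<Longrightarrow> b < 4*s+2 \<Longrightarrow> a \<noteq> b \<Longrightarrow> sig s a = sig s b \<Longrightarrow> sg s a * sg s b = -1"
  by (auto simp: sig_def sg_def split: if_splits)

lemma sin_half_nz:
  fixes s p q :: nat
  assumes "p < 2*s+1" "q < 2*s+1" "p \<noteq> q"
  shows "sin ((2*pi*(real p - real q)/real (2*s+1)) / 2) \<noteq> 0"
proof
  let ?m = "real (2*s+1)"
  assume "sin ((2*pi*(real p - real q)/?m) / 2) = 0"
  moreover have "(2*pi*(real p - real q)/?m) / 2 = ((real p - real q)/?m) * pi" by (simp add: field_simps)
  ultimately have "(real p - real q)/?m \<in> \<int>" using sin_times_pi_eq_0 by metis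
  then obtain k where k: "(real p - real q)/?m = of_int k" by (auto elim: Ints_cases)
  then have "real p - real q = of_int k * ?m" by (simp add: field_simps)
  then have "of_int (int p - int q) = (of_int (k * (2*int s+1)) :: real)" by simp
  then have kk: "int p - int q = k * (2*int s+1)" by (simp only: of_int_eq_iff)
  have "\<bar>int p - int q\<bar> < 2*int s+1" using assms by auto
  then have "\<bar>k\<bar> * (2*int s+1) < 1 * (2*int s+1)" unfolding kk by (simp add: abs_mult)
  then have "\<bar>k\<bar> < 1" by (rule mult_right_less_imp_less) simp
  then have "k = 0" by simp
  then show False using kk assms by simp
qed

lemma sin_full_z:
  fixes s p q :: nat
  shows "sin ((real s + 1/2) * (2*pi*(real p - real q)/real (2*s+1))) = 0"
proof -
  have "(real s + 1/2) * (2*pi*(real p - real q)/real (2*s+1)) = (real p - real q) * pi"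
    by (simp add: field_simps)
  moreover have "real p - real q \<in> \<int>" by simp
  ultimately show ?thesis using sin_times_pi_eq_0 by metis
qed

lemma Qm_one: "Qm s 1 1 (\<lambda>_. 1) = 1\<^sub>m (4*s+2)"
proof (rule eq_matI)
  fix a b assume "a < dim_row (1\<^sub>m (4*s+2) :: real mat)" "b < dim_col (1\<^sub>m (4*s+2) :: real mat)"
  then have a: "a < 4*s+2" and b: "b < 4*s+2" by auto
  define x where "x = 2*pi*(real (sig s a) - real (sig s b))/real (2*s+1)"
  have e: "Qm s 1 1 (\<lambda>_. 1) $$ (a,b) = (1 + sg s a * sg s b) * (1 + (\<Sum>i=1..s. 2 * cos (real i * x))) / real (4*s+2)"
    using a b sum_Re_phi[of s a b] unfolding x_def by (simp add: Qm_def algebra_simps)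
  show "Qm s 1 1 (\<lambda>_. 1) $$ (a,b) = 1\<^sub>m (4*s+2) $$ (a,b)"
  proof (cases "a = b")
    case True
    then have "x = 0" by (simp add: x_def)
    then show ?thesis unfolding e using True a sg_sq[of s b] by simp
  next
    case False
    show ?thesis
    proof (cases "sig s a = sig s b")
      case True
      then show ?thesis unfolding e using False a b sig_eq_sg[of a s b] by simp
    next
      case ne: False
      have "sin (x/2) \<noteq> 0" unfolding x_def
        by (rule sin_half_nz) (use a b sig_lt ne in auto)
      moreover have "sin (x/2) * (1 + (\<Sum>i=1..s. 2 * cos (real i * x))) = 0"
        unfolding dirichlet x_def by (rule sin_full_z)
      ultimately have "1 + (\<Sum>i=1..s. 2 * cos (real i * x)) = 0" by simp
      then show ?thesis unfolding e using False a b by simp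
    qed
  qed
qed (auto simp: Qm_def)

lemma norm_phi: "cmod (phi s j a) = 1"
  by (simp add: phi_def norm_mult sg_def)

lemma Qm_nonneg:
  assumes "l1 < 0" "l0 + l1 - 2 * (\<Sum>j=1..2*s. cmod (z j)) \<ge> 0"
    and "a < 4*s+2" "b < 4*s+2"
  shows "Qm s l0 l1 z $$ (a,b) \<ge> 0"
proof -
  have t: "2 * Re (z j * phi s j a * cnj (phi s j b)) \<ge> - (2 * cmod (z j))" for j
  proof -
    have "cmod (z j * phi s j a * cnj (phi s j b)) = cmod (z j)"
      by (simp add: norm_mult norm_phi)
    moreover have "- cmod (z j * phi s j a * cnj (phi s j b)) \<le> Re (z j * phi s j a * cnj (phi s j b))"
      using abs_Re_le_cmod[of "z j * phi s j a * cnj (phi s j b)"] by linarith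
    ultimately show ?thesis by linarith
  qed
  have "(\<Sum>j=1..2*s. 2 * Re (z j * phi s j a * cnj (phi s j b))) \<ge> (\<Sum>j=1..2*s. - (2 * cmod (z j)))"
    by (rule sum_mono) (rule t)
  then have S: "(\<Sum>j=1..2*s. 2 * Re (z j * phi s j a * cnj (phi s j b))) \<ge> - 2 * (\<Sum>j=1..2*s. cmod (z j))"
    by (simp add: sum_negf sum_distrib_left)
  have L: "sg s a * sg s b * l1 \<ge> l1" using assms(1) by (auto simp: sg_def)
  have "l0 + sg s a * sg s b * l1 + (\<Sum>j=1..2*s. 2 * Re (z j * phi s j a * cnj (phi s j b))) \<ge> 0"
    using S L assms(2) by linarith
  then show ?thesis using assms(3,4) by (simp add: Qm_def)
qed

lemma phi_flip: "a < 4*s+2 \<Longrightarrow> phi s j (4*s+1-a) = (if j \<le> s then 1 else -1) * phi s j a"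
  by (auto simp: phi_def sig_def sg_def)

lemma sum_exch:
  fixes f :: "nat \<Rightarrow> 'a::semiring_1"
  assumes "i < n"
  shows "(\<Sum>k\<in>{0..<n}. (if i + k = n - 1 then 1 else 0) * f k) = f (n - 1 - i)"
proof -
  have "(\<Sum>k\<in>{0..<n}. (if i + k = n - 1 then 1 else 0) * f k) = (\<Sum>k\<in>{0..<n}. if k = n - 1 - i then f k else 0)"
    by (rule sum.cong) (use assms in auto)
  also have "\<dots> = f (n - 1 - i)" using assms by (simp add: sum.delta')
  finally show ?thesis .
qed

lemma exch_left:
  fixes M :: "'a::semiring_1 mat"
  assumes "M \<in> carrier_mat n n"
  shows "exchange_mat n * M = mat n n (\<lambda>(i,j). M $$ (n - 1 - i, j))"
proof (rule eq_matI)
  fix i j assume "i < dim_row (mat n n (\<lambda>(i,j). M $$ (n - 1 - i, j)))" "j < dim_col (mat n n (\<lambda>(i,j). M $$ (n - 1 - i, j)))"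
  then have ij: "i < n" "j < n" by auto
  have "(exchange_mat n * M) $$ (i,j) = (\<Sum>k\<in>{0..<n}. (if i + k = n - 1 then 1 else 0) * M $$ (k,j))"
    using assms ij by (simp add: exchange_mat_def scalar_prod_def)
  also have "\<dots> = M $$ (n - 1 - i, j)" by (rule sum_exch) (rule ij)
  finally show "(exchange_mat n * M) $$ (i,j) = mat n n (\<lambda>(i,j). M $$ (n - 1 - i, j)) $$ (i,j)"
    using ij by simp
qed (use assms in \<open>auto simp: exchange_mat_def\<close>)

lemma exch_right:
  fixes M :: "'a::semiring_1 mat"
  assumes "M \<in> carrier_mat n n"
  shows "M * exchange_mat n = mat n n (\<lambda>(i,j). M $$ (i, n - 1 - j))"
proof (rule eq_matI)
  fix i j assume "i < dim_row (mat n n (\<lambda>(i,j). M $$ (i, n - 1 - j)))" "j < dim_col (mat n n (\<lambda>(i,j). M $$ (i, n - 1 - j)))"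
  then have ij: "i < n" "j < n" by auto
  have "(M * exchange_mat n) $$ (i,j) = (\<Sum>k\<in>{0..<n}. M $$ (i,k) * (if k + j = n - 1 then 1 else 0))"
    using assms ij by (simp add: exchange_mat_def scalar_prod_def)
  also have "\<dots> = (\<Sum>k\<in>{0..<n}. (if j + k = n - 1 then 1 else 0) * M $$ (i,k))"
    by (rule sum.cong) auto
  also have "\<dots> = M $$ (i, n - 1 - j)" by (rule sum_exch) (rule ij)
  finally show "(M * exchange_mat n) $$ (i,j) = mat n n (\<lambda>(i,j). M $$ (i, n - 1 - j)) $$ (i,j)"
    using ij by simp
qed (use assms in \<open>auto simp: exchange_mat_def\<close>)

lemma Qm_centro: "exchange_mat (4*s+2) * Qm s l0 l1 z * exchange_mat (4*s+2) = Qm s l0 l1 z"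
proof -
  let ?n = "4*s+2"
  let ?Q = "Qm s l0 l1 z"
  have h1: "exchange_mat ?n * ?Q = mat ?n ?n (\<lambda>(i,j). ?Q $$ (?n - 1 - i, j))"
    by (rule exch_left) (rule Qm_carrier)
  have "exchange_mat ?n * ?Q * exchange_mat ?n = mat ?n ?n (\<lambda>(i,j). ?Q $$ (?n - 1 - i, j)) * exchange_mat ?n"
    by (simp only: h1)
  also have "\<dots> = mat ?n ?n (\<lambda>(i,j). mat ?n ?n (\<lambda>(i,j). ?Q $$ (?n - 1 - i, j)) $$ (i, ?n - 1 - j))"
    by (rule exch_right) simp
  also have "\<dots> = ?Q"
  proof (rule eq_matI)
    fix a b assume "a < dim_row ?Q" "b < dim_col ?Q"
    then have a: "a < ?n" and b: "b < ?n" by (auto simp: Qm_def)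
    have sa: "sg s (4*s+1-a) = - sg s a" using a unfolding sg_def by (cases "a < 2*s+1") auto
    have sb: "sg s (4*s+1-b) = - sg s b" using b unfolding sg_def by (cases "b < 2*s+1") auto
    have "(\<Sum>j=1..2*s. 2 * Re (z j * phi s j (4*s+1-a) * cnj (phi s j (4*s+1-b)))) =
          (\<Sum>j=1..2*s. 2 * Re (z j * phi s j a * cnj (phi s j b)))"
    proof (rule sum.cong[OF refl])
      fix j
      show "2 * Re (z j * phi s j (4*s+1-a) * cnj (phi s j (4*s+1-b))) = 2 * Re (z j * phi s j a * cnj (phi s j b))"
        unfolding phi_flip[OF a] phi_flip[OF b] by (cases "j \<le> s") simp_all
    qed
    then show "mat ?n ?n (\<lambda>(i,j). mat ?n ?n (\<lambda>(i,j). ?Q $$ (?n - 1 - i, j)) $$ (i, ?n - 1 - j)) $$ (a,b) = ?Q $$ (a,b)"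
      using a b sa sb by (simp add: Qm_def)
  qed (auto simp: Qm_def)
  finally show ?thesis .
qed


lemma dfun_one: "dfun s 1 1 (\<lambda>_. 1) = (\<lambda>_. 1)"
  by (rule ext) (simp add: dfun_def)

lemma UA: "Um s * Am s = 1\<^sub>m (4*s+2)"
proof -
  have "Um s * Am s = Um s * mat_diag (4*s+2) (dfun s 1 1 (\<lambda>_. 1)) * Am s"
    unfolding dfun_one mat_diag_one by (simp only: right_mult_one_mat[OF Um_carrier])
  also have "\<dots> = map_mat complex_of_real (Qm s 1 1 (\<lambda>_. 1))" by (rule decomp)
  also have "\<dots> = 1\<^sub>m (4*s+2)" unfolding Qm_one by (rule eq_matI) auto
  finally show ?thesis .
qed

lemma AU: "Am s * Um s = 1\<^sub>m (4*s+2)"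
  by (rule mat_mult_left_right_inverse[OF Um_carrier Am_carrier UA])

lemma sandwich:
  fixes U A X Y :: "'a::comm_ring_1 mat"
  assumes U: "U \<in> carrier_mat n n" and A: "A \<in> carrier_mat n n"
    and X: "X \<in> carrier_mat n n" and Y: "Y \<in> carrier_mat n n" and AU: "A * U = 1\<^sub>m n"
  shows "(U * X * A) * (U * Y * A) = U * (X * Y) * A"
proof -
  have UY: "U * Y \<in> carrier_mat n n" "Y * A \<in> carrier_mat n n" "U * X \<in> carrier_mat n n"
    using U X Y A by auto
  have "A * (U * Y * A) = A * (U * (Y * A))" using assoc_mult_mat[OF U Y A] by simp
  also have "\<dots> = (A * U) * (Y * A)" using assoc_mult_mat[OF A U UY(2)] by simp
  also have "\<dots> = Y * A" using AU left_mult_one_mat[OF UY(2)] by simp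
  finally have e: "A * (U * Y * A) = Y * A" .
  have UYA: "U * Y * A \<in> carrier_mat n n" using UY A by auto
  have "(U * X * A) * (U * Y * A) = (U * X) * (A * (U * Y * A))"
    using assoc_mult_mat[OF UY(3) A UYA] .
  also have "\<dots> = (U * X) * (Y * A)" unfolding e ..
  also have "\<dots> = U * (X * (Y * A))" by (rule assoc_mult_mat[OF U X UY(2)])
  also have "\<dots> = U * ((X * Y) * A)" using assoc_mult_mat[OF X Y A] by simp
  also have "\<dots> = U * (X * Y) * A" by (rule assoc_mult_mat[OF U mult_carrier_mat[OF X Y] A, symmetric])
  finally show ?thesis .
qed

lemma adjoint_real:
  assumes "M \<in> carrier_mat n n"
  shows "mat_adjoint (map_mat complex_of_real M) = map_mat complex_of_real (transpose_mat M)"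
  by (rule eq_matI) (use assms in \<open>auto simp: mat_adjoint_def mat_of_rows_index\<close>)

lemma Qm_cnj: "Qm s l0 l1 (\<lambda>j. cnj (z j)) = transpose_mat (Qm s l0 l1 z)"
proof (rule eq_matI)
  fix a b assume "a < dim_row (transpose_mat (Qm s l0 l1 z))" "b < dim_col (transpose_mat (Qm s l0 l1 z))"
  then have a: "a < 4*s+2" and b: "b < 4*s+2" by (auto simp: Qm_def)
  have S: "(\<Sum>j=1..2*s. 2 * Re (cnj (z j) * phi s j a * cnj (phi s j b))) =
        (\<Sum>j=1..2*s. 2 * Re (z j * phi s j b * cnj (phi s j a)))"
  proof (rule sum.cong[OF refl])
    fix j
    have eq: "cnj (z j) * phi s j a * cnj (phi s j b) = cnj (z j * phi s j b * cnj (phi s j a))"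
      by (simp add: mult.commute mult.left_commute)
    have r: "Re (cnj w) = Re w" for w by simp
    show "2 * Re (cnj (z j) * phi s j a * cnj (phi s j b)) = 2 * Re (z j * phi s j b * cnj (phi s j a))"
      unfolding eq r ..
  qed
  have e1: "Qm s l0 l1 (\<lambda>j. cnj (z j)) $$ (a,b) = (l0 + sg s a * sg s b * l1 +
     (\<Sum>j=1..2*s. 2 * Re (cnj (z j) * phi s j a * cnj (phi s j b)))) / real (4*s+2)"
    using a b unfolding Qm_def by simp
  have e2: "transpose_mat (Qm s l0 l1 z) $$ (a,b) = (l0 + sg s b * sg s a * l1 +
     (\<Sum>j=1..2*s. 2 * Re (z j * phi s j b * cnj (phi s j a)))) / real (4*s+2)"
    using a b unfolding Qm_def by simp
  show "Qm s l0 l1 (\<lambda>j. cnj (z j)) $$ (a,b) = transpose_mat (Qm s l0 l1 z) $$ (a,b)"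
  proof -
    have c: "sg s b * sg s a = sg s a * sg s b" by (rule mult.commute)
    show ?thesis unfolding e1 e2 S c ..
  qed
qed (auto simp: Qm_def)

lemma dfun_cnj: "dfun s l0 l1 (\<lambda>j. cnj (z j)) = (\<lambda>k. cnj (dfun s l0 l1 z k))"
  by (rule ext) (simp add: dfun_def)




theorem theorem3p10:
  fixes s :: nat and l0 l1 :: real and z :: "nat \<Rightarrow> complex"
  assumes "s \<ge> 1"
    and "l0 \<ge> 0" and "0 > l1"
    and "\<forall>j\<in>{1..2*s}. Im (z j) > 0"
    and "l0 + l1 - 2 * (\<Sum>j=1..2*s. cmod (z j)) \<ge> 0"
  shows "\<exists>Q :: real mat. Q \<in> carrier_mat (4*s+2) (4*s+2) \<and>
           normal_mat (map_mat complex_of_real Q) \<and> centrosymmetric Q \<and> nonneg_mat Q \<and>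
           has_eigenvalues (map_mat complex_of_real Q)
             ([complex_of_real l0, complex_of_real l1] @ map z [1..<2*s+1] @ map (\<lambda>j. cnj (z j)) [1..<2*s+1])"
proof -
  let ?n = "4*s+2"
  define Q where "Q = Qm s l0 l1 z"
  define d where "d = dfun s l0 l1 z"
  define D where "D = mat_diag ?n d"
  define D' where "D' = mat_diag ?n (\<lambda>k. cnj (d k))"
  let ?Qc = "map_mat complex_of_real Q"
  have Qc: "?Qc \<in> carrier_mat ?n ?n" by (simp add: Q_def)
  have QcD: "?Qc = Um s * D * Am s" unfolding Q_def D_def d_def by (rule decomp[symmetric])
  have adj: "mat_adjoint ?Qc = Um s * D' * Am s"
  proof -
    have "mat_adjoint ?Qc = map_mat complex_of_real (transpose_mat Q)"
      by (rule adjoint_real[of _ "4*s+2"]) (simp add: Q_def)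
    also have "\<dots> = map_mat complex_of_real (Qm s l0 l1 (\<lambda>j. cnj (z j)))" by (simp add: Q_def Qm_cnj)
    also have "\<dots> = Um s * D' * Am s" unfolding D'_def d_def dfun_cnj[symmetric] by (rule decomp[symmetric])
    finally show ?thesis .
  qed
  have Dc: "D \<in> carrier_mat ?n ?n" "D' \<in> carrier_mat ?n ?n" by (auto simp: D_def D'_def)
  have "?Qc * mat_adjoint ?Qc = Um s * (D * D') * Am s"
    unfolding adj unfolding QcD by (rule sandwich[OF Um_carrier Am_carrier Dc AU])
  also have "D * D' = D' * D" by (simp add: D_def D'_def mult.commute)
  also have "Um s * (D' * D) * Am s = mat_adjoint ?Qc * ?Qc"
    unfolding adj unfolding QcD by (rule sandwich[OF Um_carrier Am_carrier Dc(2) Dc(1) AU, symmetric])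
  finally have normal: "normal_mat ?Qc" unfolding normal_mat_def using Qc by auto
  have dr: "dim_row Q = 4*s+2" unfolding Q_def Qm_def by simp
  have sq: "square_mat Q" unfolding Q_def Qm_def by simp
  have centro: "centrosymmetric Q"
    unfolding centrosymmetric_def dr by (rule conjI[OF sq]) (unfold Q_def, rule Qm_centro)
  have nonneg: "nonneg_mat Q"
    unfolding nonneg_mat_def using Qm_nonneg[OF assms(3) assms(5)] by (simp add: Q_def Qm_def)
  define xs where "xs = [complex_of_real l0, complex_of_real l1] @ map z [1..<2*s+1] @ map (\<lambda>j. cnj (z j)) [1..<2*s+1]"
  have sim: "similar_mat ?Qc D"
  proof -
    have "similar_mat_wit ?Qc D (Um s) (Am s)"
      unfolding similar_mat_wit_def Let_def using dr Qc Dc(1) UA[of s] AU[of s] QcD by (auto simp: Um_def)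
    then show ?thesis unfolding similar_mat_def by blast
  qed
  have ut: "upper_triangular D" unfolding upper_triangular_def D_def mat_diag_def by auto
  have diag: "diag_mat D = xs"
  proof (rule nth_equalityI)
    show "length (diag_mat D) = length xs" by (simp add: diag_mat_def D_def xs_def mat_diag_def)
    fix k assume "k < length (diag_mat D)"
    then have k: "k < ?n" by (simp add: diag_mat_def D_def mat_diag_def)
    have dk: "diag_mat D ! k = d k" using k by (simp add: diag_mat_def D_def mat_diag_def del: upt_Suc)
    show "diag_mat D ! k = xs ! k"
    proof -
      consider "k = 0" | "k = 1" | "2 \<le> k \<and> k \<le> 2*s+1" | "2*s+1 < k" by linarith
      then show ?thesis
      proof cases
        case 3
        have "xs ! k = (map z [1..<2*s+1] @ map (\<lambda>j. cnj (z j)) [1..<2*s+1]) ! (k-2)"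
          unfolding xs_def using 3 by (simp add: nth_append numeral_2_eq_2 del: upt_Suc)
        also have "\<dots> = map z [1..<2*s+1] ! (k-2)"
        proof -
          have kk: "k - 2 < length (map z [1..<2*s+1])" using 3 by (simp only: length_map length_upt) arith
          show ?thesis by (simp only: nth_append kk if_True)
        qed
        also have "\<dots> = z (1 + (k-2))"
        proof -
          have kk: "k - 2 < length [1..<2*s+1]" using 3 by (simp only: length_upt) arith
          have kk2: "1 + (k - 2) < 2*s+1" using 3 by arith
          show ?thesis by (simp only: nth_map[OF kk] nth_upt[OF kk2])
        qed
        also have "1 + (k-2) = k - 1" using 3 by arith
        finally have "xs ! k = z (k - 1)" .
        then show ?thesis using 3 by (simp add: dk d_def dfun_def)
      next
        case 4
        have "xs ! k = (map z [1..<2*s+1] @ map (\<lambda>j. cnj (z j)) [1..<2*s+1]) ! (k-2)"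
          unfolding xs_def using 4 by (simp add: nth_append numeral_2_eq_2 del: upt_Suc)
        also have "\<dots> = map (\<lambda>j. cnj (z j)) [1..<2*s+1] ! (k-2-2*s)"
        proof -
          have kk: "\<not> k - 2 < length (map z [1..<2*s+1])" using 4 by (simp only: length_map length_upt)
          have ll: "length (map z [1..<2*s+1]) = 2*s" by simp
          have kl: "k - 2 - length (map z [1..<2*s+1]) = k-2-2*s" by (simp only: ll)
          show ?thesis by (simp only: nth_append kk kl if_False)
        qed
        also have "\<dots> = cnj (z (1 + (k-2-2*s)))"
        proof -
          have kk: "k-2-2*s < length [1..<2*s+1]" using 4 k by (simp only: length_upt)
          have kk2: "1 + (k-2-2*s) < 2*s+1" using 4 k by arith
          show ?thesis by (simp only: nth_map[OF kk] nth_upt[OF kk2])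
        qed
        also have "1 + (k-2-2*s) = k - 1 - 2*s" using 4 by arith
        finally have "xs ! k = cnj (z (k - 1 - 2*s))" .
        then show ?thesis using 4 by (simp add: dk d_def dfun_def)
      next
        case 1
        then show ?thesis unfolding dk by (simp add: d_def dfun_def xs_def)
      next
        case 2
        then show ?thesis unfolding dk by (simp add: d_def dfun_def xs_def)
      qed
    qed
  qed
  have "char_poly ?Qc = char_poly D" by (rule char_poly_similar[OF sim])
  also have "\<dots> = (\<Prod>a\<leftarrow>diag_mat D. [:- a, 1:])" by (rule char_poly_upper_triangular[OF Dc(1) ut])
  finally have eig: "has_eigenvalues ?Qc xs" unfolding has_eigenvalues_def diag using Qc by auto
  show ?thesis
    unfolding xs_def[symmetric]
    by (intro exI[of _ Q] conjI normal centro nonneg eig) (simp add: Q_def)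
qed

end
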